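(* Let $n,x$ be positive integers with $x\le n$ and let $M_1,\dots,M_s$ be perfect matchings of $K_{2n}$. Let $M$ be a perfect matching of $K_{2n}$ chosen uniformly at random. For $i\in\{1,\dots,s\}$ and an $x$-matching $X\subseteq M_i$, let $A_{i,X}$ be the event $X\subseteq M$. Fix such a pair $(i,X)$, and let $\mathcal S$ be any set of pairs $(i',X')$ with $i'\in\{1,\dots,s\}$ and $X'\subseteq M_{i'}$ an $x$-matching whose vertex set is disjoint from the vertex set of $X$. Let $E=\bigcap_{(i',X')\in\mathcal S}\overline{A_{i',X'}}$ and suppose $\mathbb P(E)>0$. Then $$\mathbb P(A_{i,X}\mid E)\le\frac{1}{N},\qquad\text{where } N=\sum_{j=\max(0,\,2x-n)}^{x}\binom{2x}{2j}\frac{(2j)!}{j!\,2^j}.$$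
   Context: An $x$-matching of $K_{2n}$ is a matching (set of pairwise vertex-disjoint edges) of size exactly $x$. The empty intersection (when $\mathcal S=\emptyset$) is the whole probability space. *)

theory Defs
  imports "HOL-Probability.Probability"
begin

definition Kedges :: "nat \<Rightarrow> nat set set" where
  "Kedges n = {e. \<exists>u v. u \<noteq> v \<and> u < 2*n \<and> v < 2*n \<and> e = {u, v}}"

definition is_matching :: "nat \<Rightarrow> nat set set \<Rightarrow> bool" where
  "is_matching n X \<longleftrightarrow> X \<subseteq> Kedges n \<and> (\<forall>e\<in>X. \<forall>f\<in>X. e \<noteq> f \<longrightarrow> e \<inter> f = {})"

definition is_x_matching :: "nat \<Rightarrow> nat \<Rightarrow> nat set set \<Rightarrow> bool" where
  "is_x_matching n x X \<longleftrightarrow> is_matching n X \<and> card X = x"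

definition is_perfect_matching :: "nat \<Rightarrow> nat set set \<Rightarrow> bool" where
  "is_perfect_matching n M \<longleftrightarrow> is_matching n M \<and> \<Union>M = {0..<2*n}"

definition perfect_matchings :: "nat \<Rightarrow> nat set set set" where
  "perfect_matchings n = {M. is_perfect_matching n M}"

definition PM_space :: "nat \<Rightarrow> nat set set pmf" where
  "PM_space n = pmf_of_set (perfect_matchings n)"

definition cond_prob :: "'a pmf \<Rightarrow> 'a set \<Rightarrow> 'a set \<Rightarrow> real" where
  "cond_prob p A B = measure_pmf.prob p (A \<inter> B) / measure_pmf.prob p B"

end

theory Submission
  imports Defs
begin


definition pmat :: "nat set \<Rightarrow> nat set set set" where
  "pmat W = {\<sigma>. (\<forall>e\<in>\<sigma>. card e = 2 \<and> e \<subseteq> W) \<and> (\<forall>e\<in>\<sigma>. \<forall>f\<in>\<sigma>. e \<noteq> f \<longrightarrow> e \<inter> f = {}) \<and> \<Union>\<sigma> = W}"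

lemma pmat_finite: "finite W \<Longrightarrow> finite (pmat W)"
proof -
  assume "finite W"
  have "pmat W \<subseteq> Pow (Pow W)" unfolding pmat_def by auto
  thus ?thesis using \<open>finite W\<close> finite_subset by blast
qed

lemma pmat_empty: "pmat {} = {{}}"
  unfolding pmat_def by auto

lemma pmat_decomp:
  assumes "a \<in> W"
  shows "pmat W = (\<Union>b\<in>W-{a}. insert {a,b} ` pmat (W - {a,b}))"
proof
  show "pmat W \<subseteq> (\<Union>b\<in>W-{a}. insert {a,b} ` pmat (W - {a,b}))"
  proof
    fix \<sigma> assume s: "\<sigma> \<in> pmat W"
    then obtain e where e: "e \<in> \<sigma>" "a \<in> e" using assms unfolding pmat_def by auto
    then have "card e = 2" "e \<subseteq> W" using s unfolding pmat_def by auto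
    then obtain b where b: "e = {a,b}" "b \<noteq> a" using e(2) unfolding card_2_iff by auto
    have bW: "b \<in> W - {a}" using b \<open>e \<subseteq> W\<close> by auto
    have eab: "{a,b} \<in> \<sigma>" using e b by simp
    have P: "\<forall>e\<in>\<sigma>. card e = 2 \<and> e \<subseteq> W" "\<forall>e\<in>\<sigma>. \<forall>f\<in>\<sigma>. e \<noteq> f \<longrightarrow> e \<inter> f = {}" "\<Union>\<sigma> = W"
      using s unfolding pmat_def by auto
    have Q: "f \<inter> {a,b} = {}" if f: "f \<in> \<sigma> - {{a,b}}" for f
    proof -
      have "f \<in> \<sigma>" "f \<noteq> {a,b}" using f by auto
      thus ?thesis using P(2)[rule_format, OF \<open>f \<in> \<sigma>\<close> eab] by simp
    qed
    have U1: "\<Union>(\<sigma> - {{a,b}}) \<subseteq> W - {a,b}"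
    proof
      fix v assume "v \<in> \<Union>(\<sigma> - {{a,b}})"
      then obtain f where f: "f \<in> \<sigma> - {{a,b}}" "v \<in> f" by blast
      have "v \<in> W" using f P(3) by blast
      moreover have "v \<notin> {a,b}" using Q[OF f(1)] f(2) by blast
      ultimately show "v \<in> W - {a,b}" by blast
    qed
    have U2: "W - {a,b} \<subseteq> \<Union>(\<sigma> - {{a,b}})"
    proof
      fix v assume v: "v \<in> W - {a,b}"
      then obtain f where f: "f \<in> \<sigma>" "v \<in> f" using P(3) by blast
      have "f \<noteq> {a,b}" using v f by blast
      thus "v \<in> \<Union>(\<sigma> - {{a,b}})" using f by blast
    qed
    have "\<sigma> - {{a,b}} \<in> pmat (W - {a,b})"
      unfolding pmat_def
    proof (intro CollectI conjI ballI impI)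
      fix f assume f: "f \<in> \<sigma> - {{a,b}}"
      show "card f = 2" using f P(1) by blast
      show "f \<subseteq> W - {a,b}" using f U1 by blast
    next
      fix f g assume "f \<in> \<sigma> - {{a,b}}" "g \<in> \<sigma> - {{a,b}}" "f \<noteq> g"
      thus "f \<inter> g = {}" using P(2)[rule_format, of f g] by simp
    next
      show "\<Union>(\<sigma> - {{a,b}}) = W - {a,b}" using U1 U2 by blast
    qed
    moreover have "\<sigma> = insert {a,b} (\<sigma> - {{a,b}})" using eab by auto
    ultimately show "\<sigma> \<in> (\<Union>b\<in>W-{a}. insert {a,b} ` pmat (W - {a,b}))" using bW by blast
  qed
next
  show "(\<Union>b\<in>W-{a}. insert {a,b} ` pmat (W - {a,b})) \<subseteq> pmat W"
  proof
    fix \<sigma> assume "\<sigma> \<in> (\<Union>b\<in>W-{a}. insert {a,b} ` pmat (W - {a,b}))"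
    then obtain b t where b: "b \<in> W" "b \<noteq> a" and t: "t \<in> pmat (W - {a,b})" and st: "\<sigma> = insert {a,b} t" by auto
    have P: "\<forall>e\<in>t. card e = 2 \<and> e \<subseteq> W - {a,b}" "\<forall>e\<in>t. \<forall>f\<in>t. e \<noteq> f \<longrightarrow> e \<inter> f = {}" "\<Union>t = W - {a,b}"
      using t unfolding pmat_def by auto
    have "card {a,b} = 2" using b by auto
    then have "\<forall>e\<in>\<sigma>. card e = 2 \<and> e \<subseteq> W" using P(1) st assms b by auto
    moreover have "\<forall>e\<in>\<sigma>. \<forall>f\<in>\<sigma>. e \<noteq> f \<longrightarrow> e \<inter> f = {}" using P(1,2) st by blast
    moreover have "\<Union>\<sigma> = W" using P(3) st assms b by auto
    ultimately show "\<sigma> \<in> pmat W" unfolding pmat_def by blast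
  qed
qed

lemma pmat_count:
  "finite W \<Longrightarrow> card W = 2*j \<Longrightarrow> card (pmat W) * (fact j * 2^j) = fact (2*j)"
proof (induction j arbitrary: W)
  case 0
  then have "W = {}" by auto
  then show ?case by (simp add: pmat_empty)
next
  case (Suc j)
  then have "W \<noteq> {}" by auto
  then obtain a where a: "a \<in> W" by auto
  have eq: "pmat W = (\<Union>b\<in>W-{a}. insert {a,b} ` pmat (W - {a,b}))" using pmat_decomp[OF a] .
  have cb: "card (insert {a,b} ` pmat (W - {a,b})) = card (pmat (W - {a,b}))" if b: "b \<in> W - {a}" for b
  proof (rule card_image, rule inj_onI)
    fix s t assume st: "s \<in> pmat (W - {a, b})" "t \<in> pmat (W - {a, b})" "insert {a, b} s = insert {a, b} t"
    have "{a,b} \<notin> s" "{a,b} \<notin> t" using st(1,2) unfolding pmat_def by auto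
    then show "s = t" using st(3) by (metis insert_ident)
  qed
  have cw: "card (W - {a,b}) = 2*j" if b: "b \<in> W - {a}" for b
    using Suc.prems a b by (simp add: card_Diff_subset)
  have "card (pmat W) = (\<Sum>b\<in>W-{a}. card (insert {a,b} ` pmat (W - {a,b})))"
    unfolding eq
  proof (rule card_UN_disjoint)
    show "finite (W - {a})" using Suc.prems by auto
    show "\<forall>i\<in>W - {a}. finite (insert {a, i} ` pmat (W - {a, i}))" using Suc.prems pmat_finite by auto
    show "\<forall>i\<in>W - {a}. \<forall>j\<in>W - {a}. i \<noteq> j \<longrightarrow> insert {a, i} ` pmat (W - {a, i}) \<inter> insert {a, j} ` pmat (W - {a, j}) = {}"
    proof (intro ballI impI)
      fix i k assume "i \<in> W - {a}" "k \<in> W - {a}" "i \<noteq> k"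
      show "insert {a, i} ` pmat (W - {a, i}) \<inter> insert {a, k} ` pmat (W - {a, k}) = {}"
      proof (rule ccontr)
        assume "\<not> ?thesis"
        then obtain s t where st: "s \<in> pmat (W - {a, i})" "t \<in> pmat (W - {a, k})" "insert {a,i} s = insert {a,k} t" by auto
        have "{a,k} \<in> insert {a,i} s" using st(3) by auto
        moreover have "{a,k} \<noteq> {a,i}" using \<open>i \<noteq> k\<close> by (metis doubleton_eq_iff)
        ultimately have "{a,k} \<in> s" by auto
        then show False using st(1) unfolding pmat_def by auto
      qed
    qed
  qed
  also have "\<dots> = (\<Sum>b\<in>W-{a}. card (pmat (W - {a,b})))" using cb by simp
  finally have c1: "card (pmat W) * (fact j * 2^j) = (\<Sum>b\<in>W-{a}. card (pmat (W - {a,b})) * (fact j * 2^j))"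
    by (simp add: sum_distrib_right)
  also have "\<dots> = (\<Sum>b\<in>W-{a}. fact (2*j))"
    using Suc.IH Suc.prems(1) cw by (intro sum.cong) auto
  also have "\<dots> = (2*j+1) * fact (2*j)" using Suc.prems a by (simp add: card_Diff_singleton)
  finally have c2: "card (pmat W) * (fact j * 2^j) = (2*j+1) * fact (2*j)" .
  have "card (pmat W) * (fact (Suc j) * 2^Suc j) = (card (pmat W) * (fact j * 2^j)) * (2*j+2)"
    by (simp add: algebra_simps)
  also have "\<dots> = (2*j+2) * ((2*j+1) * fact (2*j))" using c2 by simp
  also have "\<dots> = fact (2 * Suc j)" by (simp add: algebra_simps)
  finally show ?case .
qed




lemma pmat_card:
  assumes "\<sigma> \<in> pmat W" "finite W"
  shows "card W = 2 * card \<sigma>"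
proof -
  have P: "\<forall>e\<in>\<sigma>. card e = 2 \<and> e \<subseteq> W" "\<forall>e\<in>\<sigma>. \<forall>f\<in>\<sigma>. e \<noteq> f \<longrightarrow> e \<inter> f = {}" "\<Union>\<sigma> = W"
    using assms(1) unfolding pmat_def by auto
  have fin: "finite \<sigma>" using P(1) assms(2) by (meson Pow_iff finite_Pow_iff finite_subset subsetI)
  have "card W = card (\<Union>\<sigma>)" using P(3) by simp
  also have "\<dots> = sum card \<sigma>"
  proof (rule card_Union_disjoint)
    show "pairwise disjnt \<sigma>" unfolding pairwise_def disjnt_def using P(2) by simp
    show "\<And>A. A \<in> \<sigma> \<Longrightarrow> finite A" using P(1) assms(2) by (meson finite_subset)
  qed
  also have "\<dots> = sum (\<lambda>_. 2) \<sigma>" using P(1) by (intro sum.cong) auto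
  also have "\<dots> = 2 * card \<sigma>" by simp
  finally show ?thesis .
qed

lemma pm_eq: "perfect_matchings n = pmat {0..<2*n}"
proof -
  have k: "e \<in> Kedges n \<longleftrightarrow> card e = 2 \<and> e \<subseteq> {0..<2*n}" for e
    unfolding Kedges_def card_2_iff by (auto, blast)
  have k2: "(M \<subseteq> Kedges n) = (\<forall>e\<in>M. card e = 2 \<and> e \<subseteq> {0..<2*n})" for M using k by auto
  show ?thesis unfolding perfect_matchings_def is_perfect_matching_def is_matching_def pmat_def k2
    by simp
qed

lemma pmat_nonempty: "finite W \<Longrightarrow> card W = 2*j \<Longrightarrow> pmat W \<noteq> {}"
  using pmat_count[of W j] by (metis card.empty fact_nonzero mult_is_0)

definition Iset :: "nat set \<Rightarrow> nat \<Rightarrow> nat \<Rightarrow> nat set set set" where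
  "Iset Y a b = (\<Union>j\<in>{a..b}. \<Union>W\<in>{W. W \<subseteq> Y \<and> card W = 2*j}. pmat W)"

lemma Iset_card:
  assumes "finite Y" "card Y = 2*x"
  shows "real (card (Iset Y a x)) = (\<Sum>j = a..x. real ((2*x) choose (2*j)) * fact (2*j) / (fact j * 2 ^ j))"
proof -
  have fW: "finite {W. W \<subseteq> Y \<and> card W = 2*j}" for j using assms(1) by auto
  have c1: "card (\<Union>W\<in>{W. W \<subseteq> Y \<and> card W = 2*j}. pmat W) = (\<Sum>W\<in>{W. W \<subseteq> Y \<and> card W = 2*j}. card (pmat W))" for j
  proof (rule card_UN_disjoint)
    show "finite {W. W \<subseteq> Y \<and> card W = 2*j}" by (rule fW)
    show "\<forall>i\<in>{W. W \<subseteq> Y \<and> card W = 2 * j}. finite (pmat i)" using assms(1) pmat_finite finite_subset by auto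
    show "\<forall>i\<in>{W. W \<subseteq> Y \<and> card W = 2 * j}. \<forall>k\<in>{W. W \<subseteq> Y \<and> card W = 2 * j}. i \<noteq> k \<longrightarrow> pmat i \<inter> pmat k = {}"
      unfolding pmat_def by auto
  qed
  have c2: "real (card (pmat W)) = fact (2*j) / (fact j * 2 ^ j)" if "W \<in> {W. W \<subseteq> Y \<and> card W = 2*j}" for W j
  proof -
    have "card (pmat W) * (fact j * 2^j) = fact (2*j)" using that assms(1) finite_subset by (intro pmat_count) auto
    then have "real (card (pmat W)) * (fact j * 2^j) = fact (2*j)"
      by (metis (mono_tags, lifting) of_nat_fact of_nat_mult of_nat_numeral of_nat_power)
    then show ?thesis by (simp add: field_simps)
  qed
  have c3: "real (card (\<Union>W\<in>{W. W \<subseteq> Y \<and> card W = 2*j}. pmat W)) = real ((2*x) choose (2*j)) * fact (2*j) / (fact j * 2 ^ j)" for j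
  proof -
    have "real (card (\<Union>W\<in>{W. W \<subseteq> Y \<and> card W = 2*j}. pmat W)) = (\<Sum>W\<in>{W. W \<subseteq> Y \<and> card W = 2*j}. real (card (pmat W)))"
      unfolding c1 by simp
    also have "\<dots> = (\<Sum>W\<in>{W. W \<subseteq> Y \<and> card W = 2*j}. fact (2*j) / (fact j * 2 ^ j))"
      using c2 by (intro sum.cong) auto
    also have "\<dots> = real (card {W. W \<subseteq> Y \<and> card W = 2*j}) * (fact (2*j) / (fact j * 2 ^ j))" by simp
    also have "card {W. W \<subseteq> Y \<and> card W = 2*j} = (2*x) choose (2*j)" using n_subsets[OF assms(1)] assms(2) by simp
    finally show ?thesis by simp
  qed
  have "card (Iset Y a x) = (\<Sum>j\<in>{a..x}. card (\<Union>W\<in>{W. W \<subseteq> Y \<and> card W = 2*j}. pmat W))"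
    unfolding Iset_def
  proof (rule card_UN_disjoint)
    show "finite {a..x}" by simp
    show "\<forall>i\<in>{a..x}. finite (\<Union>W\<in>{W. W \<subseteq> Y \<and> card W = 2 * i}. pmat W)"
      using fW assms(1) pmat_finite finite_subset by (metis (mono_tags, lifting) finite_UN mem_Collect_eq)
    show "\<forall>i\<in>{a..x}. \<forall>j\<in>{a..x}. i \<noteq> j \<longrightarrow> (\<Union>W\<in>{W. W \<subseteq> Y \<and> card W = 2 * i}. pmat W) \<inter> (\<Union>W\<in>{W. W \<subseteq> Y \<and> card W = 2 * j}. pmat W) = {}"
      unfolding pmat_def by auto
  qed
  then have "real (card (Iset Y a x)) = (\<Sum>j\<in>{a..x}. real (card (\<Union>W\<in>{W. W \<subseteq> Y \<and> card W = 2*j}. pmat W)))"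
    by simp
  also have "\<dots> = (\<Sum>j = a..x. real ((2*x) choose (2*j)) * fact (2*j) / (fact j * 2 ^ j))"
    using c3 by simp
  finally show ?thesis .
qed



definition pr :: "nat set set \<Rightarrow> nat set \<Rightarrow> nat set" where
  "pr M c = \<Union>{e\<in>M. e \<inter> c \<noteq> {}} - c"

lemma two_set:
  assumes "card (c::nat set) = 2"
  shows "c = {Min c, Max c}" "Min c < Max c" "finite c"
proof -
  obtain x y where xy: "c = {x,y}" "x \<noteq> y" using assms unfolding card_2_iff by auto
  show "c = {Min c, Max c}" "Min c < Max c" "finite c" using xy by (auto simp: min_def max_def)
qed

lemma two_cases: "card (c::nat set) = 2 \<Longrightarrow> u \<in> c \<Longrightarrow> u = Min c \<or> u = Max c"
  using two_set[of c] by blast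

lemma construct:
  assumes fY: "finite Y" and fO: "finite Q" and YO: "Y \<inter> Q = {}"
    and F: "F \<in> pmat Q" and sg: "\<sigma> \<in> pmat W" and WY: "W \<subseteq> Y"
    and C: "C \<in> pmat (Y - W)" and cC: "card C \<le> card F"
  shows "\<exists>M'\<in>pmat (Y \<union> Q). {e\<in>M'. e \<subseteq> Y} = \<sigma> \<and> {e\<in>M'. e \<inter> Y = {}} \<union> pr M' ` C = F"
proof -
  define U where "U = Y - W"
  have PF: "\<forall>e\<in>F. card e = 2 \<and> e \<subseteq> Q" "\<forall>e\<in>F. \<forall>f\<in>F. e \<noteq> f \<longrightarrow> e \<inter> f = {}" "\<Union>F = Q"
    using F unfolding pmat_def by auto
  have PS: "\<forall>e\<in>\<sigma>. card e = 2 \<and> e \<subseteq> W" "\<forall>e\<in>\<sigma>. \<forall>f\<in>\<sigma>. e \<noteq> f \<longrightarrow> e \<inter> f = {}" "\<Union>\<sigma> = W"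
    using sg unfolding pmat_def by auto
  have PC: "\<forall>e\<in>C. card e = 2 \<and> e \<subseteq> U" "\<forall>e\<in>C. \<forall>f\<in>C. e \<noteq> f \<longrightarrow> e \<inter> f = {}" "\<Union>C = U"
    using C unfolding pmat_def U_def by auto
  have fF: "finite F" using pmat_finite[OF fO] F
    by (meson PF(1) Pow_iff finite_Pow_iff finite_subset subsetI fO)
  have fU: "finite U" unfolding U_def using fY by simp
  have fC: "finite C" using PC(1) fU by (meson Pow_iff finite_Pow_iff finite_subset subsetI)
  obtain \<psi> where psi: "\<psi> ` C \<subseteq> F" "inj_on \<psi> C" using card_le_inj[OF fC fF cC] by blast
  define B where "B = \<psi> ` C"
  have BF: "B \<subseteq> F" using psi B_def by simp
  define cu where "cu u = (THE c. c \<in> C \<and> u \<in> c)" for u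
  have cu_eq: "cu u = c" if "c \<in> C" "u \<in> c" for u c
  proof -
    have "\<exists>!c. c \<in> C \<and> u \<in> c"
    proof (rule ex1I[of _ c])
      show "c \<in> C \<and> u \<in> c" using that by simp
      fix d assume d: "d \<in> C \<and> u \<in> d"
      show "d = c"
      proof (rule ccontr)
        assume "d \<noteq> c"
        then have "d \<inter> c = {}" using PC(2) d that(1) by blast
        then show False using d that(2) by auto
      qed
    qed
    then show ?thesis unfolding cu_def using that by (metis (mono_tags, lifting) the_equality)
  qed
  have cu_in: "cu u \<in> C \<and> u \<in> cu u" if uU: "u \<in> U" for u
  proof -
    obtain c where "c \<in> C" "u \<in> c" using PC(3) uU by blast
    then show ?thesis using cu_eq by simp
  qed
  define \<phi> where "\<phi> u = (if u = Min (cu u) then Min (\<psi> (cu u)) else Max (\<psi> (cu u)))" for u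
  have psiF: "\<psi> c \<in> F" "card (\<psi> c) = 2" "\<psi> c \<subseteq> Q" if "c \<in> C" for c
    using psi(1) that PF(1) by auto
  have phi_in: "\<phi> u \<in> \<psi> (cu u)" if "u \<in> U" for u
  proof -
    have "card (\<psi> (cu u)) = 2" using psiF cu_in that by blast
    then have "Min (\<psi> (cu u)) \<in> \<psi> (cu u)" "Max (\<psi> (cu u)) \<in> \<psi> (cu u)"
      using two_set by (metis insertI1 insert_commute)+
    then show ?thesis unfolding \<phi>_def by simp
  qed
  have phiO: "\<phi> u \<in> Q" if "u \<in> U" for u using phi_in[OF that] psiF(3) cu_in[OF that] by blast
  have UY: "U \<subseteq> Y" unfolding U_def by blast
  have phi_min: "\<phi> (Min c) = Min (\<psi> c)" if "c \<in> C" for c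
  proof -
    have "card c = 2" using PC(1) that by blast
    then have "Min c \<in> c" using two_set by (metis insertI1)
    then have "cu (Min c) = c" using cu_eq that by blast
    then show ?thesis unfolding \<phi>_def by simp
  qed
  have phi_max: "\<phi> (Max c) = Max (\<psi> c)" if "c \<in> C" for c
  proof -
    have "card c = 2" using PC(1) that by blast
    then have "Max c \<in> c" "Max c \<noteq> Min c" using two_set by (metis insertI1 insert_commute, fastforce)
    then have "cu (Max c) = c" using cu_eq that by blast
    then show ?thesis unfolding \<phi>_def using \<open>Max c \<noteq> Min c\<close> by simp
  qed
  have phi_img: "\<phi> ` c = \<psi> c" if "c \<in> C" for c
  proof -
    have "card c = 2" using PC(1) that by blast
    then have "c = {Min c, Max c}" using two_set by blast
    then have "\<phi> ` c = {Min (\<psi> c), Max (\<psi> c)}" using phi_min[OF that] phi_max[OF that]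
      by (metis image_empty image_insert)
    also have "\<dots> = \<psi> c" using two_set(1)[OF psiF(2)[OF that]] by simp
    finally show ?thesis .
  qed
  have phi_inj: "inj_on \<phi> U"
  proof (rule inj_onI)
    fix u v assume u: "u \<in> U" and v: "v \<in> U" and eq: "\<phi> u = \<phi> v"
    show "u = v"
    proof (cases "cu u = cu v")
      case True
      define c where "c = cu u"
      have c: "c \<in> C" "u \<in> c" "v \<in> c" using cu_in u v True c_def by auto
      have c2: "card c = 2" using PC(1) c(1) by blast
      have d2: "Min (\<psi> c) \<noteq> Max (\<psi> c)" using two_set(2)[OF psiF(2)[OF c(1)]] by simp
      have m: "Min c \<noteq> Max c" using two_set(2)[OF c2] by simp
      show ?thesis
        using two_cases[OF c2 c(2)] two_cases[OF c2 c(3)] eq phi_min[OF c(1)] phi_max[OF c(1)] d2 m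
        by auto
    next
      case False
      have "\<psi> (cu u) \<noteq> \<psi> (cu v)" using False psi(2) cu_in u v by (meson inj_on_eq_iff)
      then have "\<psi> (cu u) \<inter> \<psi> (cu v) = {}" using PF(2) psiF(1) cu_in u v by blast
      then show ?thesis using phi_in u v eq by (metis IntI empty_iff)
    qed
  qed
  have phiB: "\<phi> ` U = \<Union>B"
  proof
    show "\<phi> ` U \<subseteq> \<Union>B"
    proof
      fix z assume "z \<in> \<phi> ` U"
      then obtain u where u: "u \<in> U" "z = \<phi> u" by blast
      have "z \<in> \<psi> (cu u)" "cu u \<in> C" using phi_in[OF u(1)] cu_in[OF u(1)] u(2) by auto
      then show "z \<in> \<Union>B" unfolding B_def by blast
    qed
    show "\<Union>B \<subseteq> \<phi> ` U"
    proof
      fix z assume "z \<in> \<Union>B"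
      then obtain c where c: "c \<in> C" "z \<in> \<psi> c" unfolding B_def by blast
      then have "z \<in> \<phi> ` c" using phi_img by simp
      moreover have "c \<subseteq> U" using PC(1) c(1) by blast
      ultimately show "z \<in> \<phi> ` U" by blast
    qed
  qed
  define cross where "cross = (\<lambda>u. {u, \<phi> u}) ` U"
  define M' where "M' = \<sigma> \<union> (F - B) \<union> cross"
  have FB_disj: "f \<inter> b = {}" if "f \<in> F - B" "b \<in> B" for f b
    using PF(2)[rule_format, of f b] that BF by auto
  have FBO: "f \<subseteq> Q" "card f = 2" if "f \<in> F - B" for f using PF(1) that by auto
  have UO: "u \<notin> Q" if "u \<in> U" for u using UY YO that by auto
  have UW: "u \<notin> W" if "u \<in> U" for u using that unfolding U_def by blast
  have crossE: "\<exists>u\<in>U. e = {u, \<phi> u}" if "e \<in> cross" for e using that unfolding cross_def by blast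
  have phiB': "\<phi> u \<in> \<Union>B" if "u \<in> U" for u using phiB that by blast
  have d1: "e \<inter> f = {}" if "e \<in> \<sigma>" "f \<in> F - B" for e f
  proof -
    have "e \<subseteq> W" using PS(1) that(1) by blast
    then show ?thesis using FBO(1)[OF that(2)] WY YO by auto
  qed
  have d2: "e \<inter> f = {}" if A: "e \<in> \<sigma>" "f \<in> cross" for e f
  proof -
    obtain u where u: "u \<in> U" "f = {u, \<phi> u}" using crossE A(2) by blast
    have "e \<subseteq> W" using PS(1) A(1) by blast
    then show ?thesis using u UW[OF u(1)] phiO[OF u(1)] WY YO by auto
  qed
  have d3: "e \<inter> f = {}" if A: "e \<in> F - B" "f \<in> cross" for e f
  proof -
    obtain u where u: "u \<in> U" "f = {u, \<phi> u}" using crossE A(2) by blast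
    obtain b where b: "b \<in> B" "\<phi> u \<in> b" using phiB'[OF u(1)] by blast
    have "\<phi> u \<notin> e" using FB_disj[OF A(1) b(1)] b(2) by auto
    moreover have "u \<notin> e" using FBO(1)[OF A(1)] UO[OF u(1)] by auto
    ultimately show ?thesis using u(2) by auto
  qed
  have d4: "e \<inter> f = {}" if A: "e \<in> cross" "f \<in> cross" "e \<noteq> f" for e f
  proof -
    obtain u where u: "u \<in> U" "e = {u, \<phi> u}" using crossE A(1) by blast
    obtain v where v: "v \<in> U" "f = {v, \<phi> v}" using crossE A(2) by blast
    have "u \<noteq> v" using u v A(3) by auto
    then have "\<phi> u \<noteq> \<phi> v" using phi_inj u(1) v(1) by (meson inj_on_eq_iff)
    moreover have "u \<noteq> \<phi> v" "v \<noteq> \<phi> u" using UO u(1) v(1) phiO by metis+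
    ultimately show ?thesis using u(2) v(2) \<open>u \<noteq> v\<close> by auto
  qed
  have Mdisj: "e \<inter> f = {}" if "e \<in> M'" "f \<in> M'" "e \<noteq> f" for e f
  proof -
    have e: "e \<in> \<sigma> \<or> e \<in> F - B \<or> e \<in> cross" and f: "f \<in> \<sigma> \<or> f \<in> F - B \<or> f \<in> cross"
      using that unfolding M'_def by auto
    have s1: "e \<inter> f = {}" if "e \<in> \<sigma>" "f \<in> \<sigma>" using PS(2) that \<open>e \<noteq> f\<close> by auto
    have s2: "e \<inter> f = {}" if "e \<in> F - B" "f \<in> F - B" using PF(2) that \<open>e \<noteq> f\<close> by auto
    have ne: "f \<noteq> e" using \<open>e \<noteq> f\<close> by simp
    from e show ?thesis
    proof (elim disjE)
      assume E: "e \<in> \<sigma>"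
      from f show ?thesis
      proof (elim disjE)
        assume "f \<in> \<sigma>" then show ?thesis by (rule s1[OF E])
      next
        assume "f \<in> F - B" then show ?thesis by (rule d1[OF E])
      next
        assume "f \<in> cross" then show ?thesis by (rule d2[OF E])
      qed
    next
      assume E: "e \<in> F - B"
      from f show ?thesis
      proof (elim disjE)
        assume "f \<in> \<sigma>" then show ?thesis using d1[of f e] E by (simp add: Int_commute)
      next
        assume "f \<in> F - B" then show ?thesis by (rule s2[OF E])
      next
        assume "f \<in> cross" then show ?thesis by (rule d3[OF E])
      qed
    next
      assume E: "e \<in> cross"
      from f show ?thesis
      proof (elim disjE)
        assume "f \<in> \<sigma>" then show ?thesis using d2[of f e] E by (simp add: Int_commute)
      next
        assume "f \<in> F - B" then show ?thesis using d3[of f e] E by (simp add: Int_commute)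
      next
        assume "f \<in> cross" then show ?thesis by (rule d4[OF E _ \<open>e \<noteq> f\<close>])
      qed
    qed
  qed
  have Medge: "card e = 2 \<and> e \<subseteq> Y \<union> Q" if "e \<in> M'" for e
  proof -
    have "e \<in> \<sigma> \<or> e \<in> F - B \<or> e \<in> cross" using that unfolding M'_def by auto
    moreover have ?thesis if "e \<in> \<sigma>" using PS(1) that WY by blast
    moreover have ?thesis if "e \<in> F - B" using FBO that by blast
    moreover have ?thesis if ec: "e \<in> cross"
    proof -
      obtain u where u: "u \<in> U" "e = {u, \<phi> u}" using crossE ec by blast
      have "u \<noteq> \<phi> u" using UO u(1) phiO by metis
      then show ?thesis using u UY phiO[OF u(1)] by auto
    qed
    ultimately show ?thesis by blast
  qed
  have UFB: "\<Union>(F - B) = Q - \<Union>B"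
  proof
    show "\<Union>(F - B) \<subseteq> Q - \<Union>B"
    proof
      fix z assume "z \<in> \<Union>(F - B)"
      then obtain f where f: "f \<in> F - B" "z \<in> f" by blast
      have "z \<in> Q" using FBO(1)[OF f(1)] f(2) by blast
      moreover have "z \<notin> \<Union>B"
      proof
        assume "z \<in> \<Union>B"
        then obtain b where "b \<in> B" "z \<in> b" by blast
        then show False using FB_disj[OF f(1)] f(2) by auto
      qed
      ultimately show "z \<in> Q - \<Union>B" by blast
    qed
    show "Q - \<Union>B \<subseteq> \<Union>(F - B)"
    proof
      fix z assume z: "z \<in> Q - \<Union>B"
      then obtain f where f: "f \<in> F" "z \<in> f" using PF(3) by blast
      have "f \<notin> B" using z f by blast
      then show "z \<in> \<Union>(F - B)" using f by blast
    qed
  qed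
  have Ucross: "\<Union>cross = U \<union> \<phi> ` U" unfolding cross_def by blast
  have BQ: "\<Union>B \<subseteq> Q" using BF PF(1) by blast
  have Munion: "\<Union>M' = Y \<union> Q"
  proof -
    have "\<Union>M' = W \<union> (Q - \<Union>B) \<union> (U \<union> \<Union>B)"
      unfolding M'_def Union_Un_distrib PS(3) UFB Ucross phiB by simp
    also have "\<dots> = Y \<union> Q" using BQ WY unfolding U_def by blast
    finally show ?thesis .
  qed
  have Mpm: "M' \<in> pmat (Y \<union> Q)"
    unfolding pmat_def using Medge Mdisj Munion by blast
  have inY: "{e\<in>M'. e \<subseteq> Y} = \<sigma>"
  proof
    show "\<sigma> \<subseteq> {e\<in>M'. e \<subseteq> Y}" using PS(1) WY unfolding M'_def by blast
    show "{e\<in>M'. e \<subseteq> Y} \<subseteq> \<sigma>"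
    proof
      fix e assume e: "e \<in> {e\<in>M'. e \<subseteq> Y}"
      have "e \<notin> F - B"
      proof
        assume "e \<in> F - B"
        then have "e \<subseteq> Q" "card e = 2" using FBO by auto
        then have "e = {}" using e YO by blast
        then show False using \<open>card e = 2\<close> by simp
      qed
      moreover have "e \<notin> cross"
      proof
        assume "e \<in> cross"
        then obtain u where u: "u \<in> U" "e = {u, \<phi> u}" using crossE by blast
        then show False using e phiO[OF u(1)] YO by auto
      qed
      ultimately show "e \<in> \<sigma>" using e unfolding M'_def by blast
    qed
  qed
  have outY: "{e\<in>M'. e \<inter> Y = {}} = F - B"
  proof
    show "F - B \<subseteq> {e\<in>M'. e \<inter> Y = {}}"
    proof
      fix e assume e: "e \<in> F - B"
      then have "e \<inter> Y = {}" using FBO(1)[OF e] YO by auto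
      then show "e \<in> {e\<in>M'. e \<inter> Y = {}}" using e unfolding M'_def by blast
    qed
    show "{e\<in>M'. e \<inter> Y = {}} \<subseteq> F - B"
    proof
      fix e assume e: "e \<in> {e\<in>M'. e \<inter> Y = {}}"
      have "e \<notin> \<sigma>"
      proof
        assume "e \<in> \<sigma>"
        then have "e \<subseteq> Y" "card e = 2" using PS(1) WY by auto
        then have "e = {}" using e by auto
        then show False using \<open>card e = 2\<close> by simp
      qed
      moreover have "e \<notin> cross"
      proof
        assume "e \<in> cross"
        then obtain u where u: "u \<in> U" "e = {u, \<phi> u}" using crossE by blast
        then show False using e UY by auto
      qed
      ultimately show "e \<in> F - B" using e unfolding M'_def by blast
    qed
  qed
  have prc: "pr M' c = \<psi> c" if c: "c \<in> C" for c
  proof -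
    have cU: "c \<subseteq> U" using PC(1) c by blast
    have S: "{e\<in>M'. e \<inter> c \<noteq> {}} = (\<lambda>u. {u, \<phi> u}) ` c"
    proof
      show "(\<lambda>u. {u, \<phi> u}) ` c \<subseteq> {e\<in>M'. e \<inter> c \<noteq> {}}"
        using cU unfolding M'_def cross_def by blast
      show "{e\<in>M'. e \<inter> c \<noteq> {}} \<subseteq> (\<lambda>u. {u, \<phi> u}) ` c"
      proof
        fix e assume e: "e \<in> {e\<in>M'. e \<inter> c \<noteq> {}}"
        then obtain w where w: "w \<in> e" "w \<in> c" by blast
        have "e \<notin> \<sigma>"
        proof
          assume "e \<in> \<sigma>" then have "e \<subseteq> W" using PS(1) by blast
          then show False using w cU UW by blast
        qed
        moreover have "e \<notin> F - B"
        proof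
          assume "e \<in> F - B" then have "e \<subseteq> Q" using FBO by blast
          then show False using w cU UO by blast
        qed
        ultimately have "e \<in> cross" using e unfolding M'_def by blast
        then obtain u where u: "u \<in> U" "e = {u, \<phi> u}" using crossE by blast
        have "\<phi> u \<notin> c" using phiO[OF u(1)] cU UO by blast
        then have "u \<in> c" using w u(2) by auto
        then show "e \<in> (\<lambda>u. {u, \<phi> u}) ` c" using u(2) by blast
      qed
    qed
    have "\<Union>((\<lambda>u. {u, \<phi> u}) ` c) = c \<union> \<phi> ` c" by blast
    moreover have "\<phi> ` c \<inter> c = {}" using phiO cU UO by blast
    ultimately have "pr M' c = \<phi> ` c" unfolding pr_def S by blast
    then show ?thesis using phi_img[OF c] by simp
  qed
  have "pr M' ` C = B" unfolding B_def using prc by simp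
  then have "{e\<in>M'. e \<inter> Y = {}} \<union> pr M' ` C = F" using outY BF by blast
  then show ?thesis using Mpm inY by blast
qed

definition canon :: "nat set \<Rightarrow> nat set set" where
  "canon U = (SOME C. C \<in> pmat U)"

lemma canon_in: "finite U \<Longrightarrow> card U = 2*k \<Longrightarrow> canon U \<in> pmat U"
  unfolding canon_def using pmat_nonempty[of U k] by (metis ex_in_conv someI_ex)

theorem mainTheorem5:
  fixes n x s i :: nat and Ms :: "nat \<Rightarrow> nat set set" and X :: "nat set set"
    and S :: "(nat \<times> nat set set) set"
  assumes "0 < x" and "x \<le> n"
    and "\<forall>k\<in>{1..s}. is_perfect_matching n (Ms k)"
    and "i \<in> {1..s}" and "X \<subseteq> Ms i" and "is_x_matching n x X"
    and "\<forall>(i', X')\<in>S. i' \<in> {1..s} \<and> X' \<subseteq> Ms i' \<and> is_x_matching n x X'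
                        \<and> \<Union>X' \<inter> \<Union>X = {}"
  defines "E \<equiv> {M. \<forall>(i', X')\<in>S. \<not> X' \<subseteq> M}"
    and "A \<equiv> {M. X \<subseteq> M}"
  assumes "measure_pmf.prob (PM_space n) E > 0"
  shows "cond_prob (PM_space n) A E \<le>
    1 / (\<Sum>j = 2*x - n..x. real ((2*x) choose (2*j)) * fact (2*j) / (fact j * 2 ^ j))"
proof -
  define V where "V = {0..<2*n}"
  define Y where "Y = \<Union>X"
  define Q where "Q = V - Y"
  define PM where "PM = perfect_matchings n"
  define h where "h M' = X \<union> {e\<in>M'. e \<inter> Y = {}} \<union> pr M' ` canon (Y - \<Union>{e\<in>M'. e \<subseteq> Y})" for M'
  define I where "I = Iset Y (2*x - n) x"
  define fib where "fib M = {M'\<in>PM. h M' = M}" for M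
  have PMV: "PM = pmat V" unfolding PM_def V_def by (rule pm_eq)
  have fV: "finite V" unfolding V_def by simp
  have finPM: "finite PM" unfolding PMV using pmat_finite[OF fV] .
  have MiPM: "Ms i \<in> PM" using assms(3,4) unfolding PM_def perfect_matchings_def by blast
  have XKm: "is_matching n X" "card X = x" using assms(6) unfolding is_x_matching_def by auto
  have Xp: "X \<in> pmat Y"
  proof -
    have k: "e \<in> Kedges n \<Longrightarrow> card e = 2 \<and> e \<subseteq> V" for e
      unfolding Kedges_def V_def by auto
    show ?thesis using XKm(1) k unfolding is_matching_def pmat_def Y_def by auto
  qed
  have YV: "Y \<subseteq> V"
  proof -
    have "\<forall>e\<in>X. e \<subseteq> V" unfolding V_def using XKm(1) unfolding is_matching_def Kedges_def by auto
    then show ?thesis unfolding Y_def by blast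
  qed
  have fY: "finite Y" using YV fV finite_subset by auto
  have fQ: "finite Q" unfolding Q_def using fV by simp
  have cY: "card Y = 2*x" using pmat_card[OF Xp fY] XKm(2) by simp
  have cV: "card V = 2*n" unfolding V_def by simp
  have cQ: "card Q = 2*(n - x)" unfolding Q_def using card_Diff_subset[OF fY YV] cY cV by simp
  have YQ: "Y \<inter> Q = {}" unfolding Q_def by auto
  have YQV: "Y \<union> Q = V" unfolding Q_def using YV by auto
  have PX: "\<forall>e\<in>X. card e = 2 \<and> e \<subseteq> Y" "\<forall>e\<in>X. \<forall>f\<in>X. e \<noteq> f \<longrightarrow> e \<inter> f = {}" "\<Union>X = Y"
    using Xp unfolding pmat_def by auto
  have decomp: "M - X \<in> pmat Q" if M: "M \<in> PM" "X \<subseteq> M" for M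
  proof -
    have PMM: "\<forall>e\<in>M. card e = 2 \<and> e \<subseteq> V" "\<forall>e\<in>M. \<forall>f\<in>M. e \<noteq> f \<longrightarrow> e \<inter> f = {}" "\<Union>M = V"
      using M(1) unfolding PMV pmat_def by auto
    have dis: "e \<inter> Y = {}" if e: "e \<in> M - X" for e
    proof -
      have "e \<inter> f = {}" if f: "f \<in> X" for f
        using PMM(2)[rule_format, of e f] e f M(2) by auto
      then show ?thesis unfolding Y_def by auto
    qed
    have eQ: "e \<subseteq> Q" if e: "e \<in> M - X" for e
      using dis[OF e] PMM(1) e unfolding Q_def by auto
    have "\<Union>(M - X) = Q"
    proof
      show "\<Union>(M - X) \<subseteq> Q" using eQ by blast
      show "Q \<subseteq> \<Union>(M - X)"
      proof
        fix v assume v: "v \<in> Q"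
        then obtain e where e: "e \<in> M" "v \<in> e" using PMM(3) unfolding Q_def by blast
        have "e \<notin> X" using v e(2) unfolding Q_def Y_def by blast
        then show "v \<in> \<Union>(M - X)" using e by blast
      qed
    qed
    then show ?thesis unfolding pmat_def using PMM(1,2) eQ by blast
  qed
  have Isub: "I \<subseteq> (\<lambda>M'. {e\<in>M'. e \<subseteq> Y}) ` fib M" if M: "M \<in> PM" "X \<subseteq> M" for M
  proof
    fix \<sigma> assume "\<sigma> \<in> I"
    then obtain j W where j: "j \<in> {2*x - n..x}" and W: "W \<subseteq> Y" "card W = 2*j" and sg: "\<sigma> \<in> pmat W"
      unfolding I_def Iset_def by blast
    define F where "F = M - X"
    have F: "F \<in> pmat Q" unfolding F_def using decomp[OF M] .
    have cF: "card Q = 2 * card F" using pmat_card[OF F fQ] .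
    have cU: "card (Y - W) = 2 * (x - j)" using card_Diff_subset[OF finite_subset[OF W(1) fY] W(1)] cY W(2) by simp
    have fU: "finite (Y - W)" using fY by simp
    define C where "C = canon (Y - W)"
    have C: "C \<in> pmat (Y - W)" unfolding C_def using canon_in[OF fU cU] .
    have cC: "card (Y - W) = 2 * card C" using pmat_card[OF C fU] .
    have "card C = x - j" using cC cU by simp
    moreover have "card F = n - x" using cF cQ by simp
    ultimately have le: "card C \<le> card F" using j assms(2) by auto
    obtain M' where M': "M' \<in> pmat (Y \<union> Q)" "{e\<in>M'. e \<subseteq> Y} = \<sigma>" "{e\<in>M'. e \<inter> Y = {}} \<union> pr M' ` C = F"
      using construct[OF fY fQ YQ F sg W(1) C le] by blast
    have "\<Union>\<sigma> = W" using sg unfolding pmat_def by auto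
    then have "h M' = X \<union> ({e\<in>M'. e \<inter> Y = {}} \<union> pr M' ` C)" unfolding h_def M'(2) C_def by auto
    also have "\<dots> = M" unfolding M'(3) F_def using M(2) by auto
    finally have "M' \<in> fib M" unfolding fib_def PMV using M'(1) YQV by simp
    then show "\<sigma> \<in> (\<lambda>M'. {e\<in>M'. e \<subseteq> Y}) ` fib M" using M'(2) by blast
  qed
  have finfib: "finite (fib M)" for M using finPM unfolding fib_def by simp
  have cfib: "card I \<le> card (fib M)" if M: "M \<in> PM" "X \<subseteq> M" for M
  proof -
    have "card I \<le> card ((\<lambda>M'. {e\<in>M'. e \<subseteq> Y}) ` fib M)"
      using Isub[OF M] by (intro card_mono) (auto intro: finfib)
    also have "\<dots> \<le> card (fib M)" by (rule card_image_le[OF finfib])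
    finally show ?thesis .
  qed
  have fibE: "fib M \<subseteq> E" if M: "M \<in> E" for M
  proof
    fix M' assume M': "M' \<in> fib M"
    have hM: "h M' = M" using M' unfolding fib_def by simp
    show "M' \<in> E" unfolding E_def
    proof (clarsimp)
      fix i' X' assume iX: "(i', X') \<in> S" and sub: "X' \<subseteq> M'"
      have "\<Union>X' \<inter> \<Union>X = {}" using assms(7) iX by blast
      then have "\<forall>e\<in>X'. e \<inter> Y = {}" unfolding Y_def by auto
      then have "X' \<subseteq> {e\<in>M'. e \<inter> Y = {}}" using sub by auto
      also have "\<dots> \<subseteq> M" unfolding hM[symmetric] h_def by auto
      finally have "X' \<subseteq> M" .
      then show False using M iX unfolding E_def by auto
    qed
  qed
  define AnE where "AnE = PM \<inter> (A \<inter> E)"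
  have fAnE: "finite AnE" unfolding AnE_def using finPM by simp
  have key: "card AnE * card I \<le> card (PM \<inter> E)"
  proof -
    have "card AnE * card I = (\<Sum>M\<in>AnE. card I)" by simp
    also have "\<dots> \<le> (\<Sum>M\<in>AnE. card (fib M))"
      using cfib unfolding AnE_def A_def by (intro sum_mono) auto
    also have "\<dots> = card (\<Union>M\<in>AnE. fib M)"
      using fAnE finfib by (intro card_UN_disjoint[symmetric]) (auto simp: fib_def)
    also have "\<dots> \<le> card (PM \<inter> E)"
    proof (intro card_mono)
      show "finite (PM \<inter> E)" using finPM by simp
      show "(\<Union>M\<in>AnE. fib M) \<subseteq> PM \<inter> E"
        using fibE unfolding AnE_def by (auto simp: fib_def)
    qed
    finally show ?thesis .
  qed
  have fI: "finite I" unfolding I_def Iset_def using fY pmat_finite finite_subset by auto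
  have XI: "X \<in> I" unfolding I_def Iset_def using Xp cY assms(2) by auto
  have Ipos: "card I > 0" using fI XI card_gt_0_iff by blast
  have Neq: "real (card I) = (\<Sum>j = 2*x - n..x. real ((2*x) choose (2*j)) * fact (2*j) / (fact j * 2 ^ j))"
    unfolding I_def by (rule Iset_card[OF fY cY])
  have PMne: "PM \<noteq> {}" using MiPM by blast
  have prob: "measure_pmf.prob (PM_space n) B = real (card (PM \<inter> B)) / real (card PM)" for B
    unfolding PM_space_def PM_def[symmetric] using measure_pmf_of_set[OF PMne finPM] by simp
  have cPM: "card PM > 0" using finPM PMne card_gt_0_iff by blast
  have pE: "measure_pmf.prob (PM_space n) E > 0" by fact
  have cE: "card (PM \<inter> E) > 0" 
  proof (rule ccontr)
    assume "\<not> card (PM \<inter> E) > 0"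
    then have "card (PM \<inter> E) = 0" by simp
    then show False using pE unfolding prob by simp
  qed
  have cp: "cond_prob (PM_space n) A E = real (card AnE) / real (card (PM \<inter> E))"
    unfolding cond_prob_def prob AnE_def using cPM by (simp add: field_simps)
  have "real (card AnE) / real (card (PM \<inter> E)) \<le> 1 / real (card I)"
  proof -
    have "real (card AnE) * real (card I) \<le> real (card (PM \<inter> E))" using key
      by (metis of_nat_le_iff of_nat_mult)
    then show ?thesis using cE Ipos by (simp add: field_simps)
  qed
  then show ?thesis unfolding cp Neq .
qed


end
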